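(* Let $K$ be a power of two and let $\mathcal S_1,\dots,\mathcal S_K$ be sorted sequences of strings with LCP arrays $H_1,\dots,H_K$, all strings having a common prefix of length $\bar h$. The $K$-way LCP-merge described in the context outputs the sorted sequence $\mathcal S_0$ of all $n=\sum_k|\mathcal S_k|$ strings together with its LCP array $H_0$, and it performs at most $\Delta L + n\log_2 K + K$ character comparisons, where $\Delta L = L(H_0)-\sum_{k=1}^K L(H_k)$.
   Context: Strings are zero-terminated finite sequences over a totally ordered alphabet, ordered lexicographically; $\mathrm{lcp}(s,t)$ is the length of their longest common prefix. For a sorted sequence $s_1\le\dots\le s_m$ its LCP array is $H=(\bot,h_2,\dots,h_m)$ with $h_i=\mathrm{lcp}(s_{i-1},s_i)$, and $L(H)=\sum_{i\ge2} h_i$. Each input ends with a sentinel string $\infty$ larger than all strings. LCP-Compare: given $(a,s_a,h_a)$ and $(b,s_b,h_b)$ where $h_a=\mathrm{lcp}(p,s_a)$, $h_b=\mathrm{lcp}(p,s_b)$ for some string $p\le s_a,s_b$: if $h_a<h_b$ return $(b,h_b,a,h_a)$; if $h_b<h_a$ return $(a,h_a,b,h_b)$; if $h_a=h_b$, set $h':=h_a$ and compare $s_a[h'+1]$ with $s_b[h'+1]$, incrementing $h'$ while they are equal and not the terminator; then return $(a,h_a,b,h')$ if $s_a[h'+1]\le s_b[h'+1]$ and $(b,h_b,a,h')$ otherwise. Counting convention: each loop test yielding equality is one character comparison; the final failing test together with the following $\le$ test is one comparison; cases $h_a\ne h_b$ use none. $K$-way LCP-merge (LCP-aware tournament/loser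 tree): the tree is an implicit perfect binary tree with nodes $1,\dots,K$ (node $\lceil v/2\rceil$ is the parent of $v$); input $k$ corresponds to leaf position $K+k$. Node $v\ge 2$ stores a pair $(y_v,h_v)$: the index of the loser of the game at $v$ and the LCP of that loser's current string with the winner of that game; node 1 stores the overall winner $(w,h_1)$. Let $s_k$ denote the current head of input $k$. Initialization: for $k=1,\dots,K$, start with $(x,h'):=(k,\bar h)$ at $v:=K+k$ and, while $v$ is even, set $v:=v/2$ and $(x,h',y_v,h_v):=\text{LCP-Compare}((x,s_x,h'),(y_v,s_{y_v},h_v))$; then store $(y_v,h_v):=(x,h')$; finally $w:=y_1$. Main loop (repeated $n$ times): output $s_w$ with LCP entry $h_1$; advance input $w$ to its next string $s_w$ and set $(x,h'):=(w,\text{the LCP-array entry of this new string in } H_w)$, $v:=K+w$; while $v>2$ set $v:=\lceil v/2\rceil$ and $(x,h',y_v,h_v):=\text{LCP-Compare}((x,s_x,h'),(y_v,s_{y_v},h_v))$; then set $(w,h_1):=(x,h')$. *)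

theory Defs
  imports Complex_Main "HOL-Library.List_Lexorder" "HOL-Library.Sublist" "HOL-Library.Multiset"
begin

text \<open>A string is a finite list over a linearly ordered alphabet; the zero terminator is
implicit (it is the position just after the end of the list and is smaller than every
character). The order on strings is the lexicographic order of HOL-Library.List_Lexorder,
where a proper prefix is smaller, i.e. exactly the order of zero-terminated strings.\<close>

fun lcp :: "'a list \<Rightarrow> 'a list \<Rightarrow> nat" where
  "lcp (x # xs) (y # ys) = (if x = y then Suc (lcp xs ys) else 0)"
| "lcp _ _ = 0"

text \<open>LCP array without the undefined first entry: the entries h_2,...,h_m.\<close>
fun lcp_array :: "'a list list \<Rightarrow> nat list" where
  "lcp_array (a # b # xs) = lcp a b # lcp_array (b # xs)"
| "lcp_array _ = []"

definition L :: "nat list \<Rightarrow> nat" where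
  "L H = sum_list H"

datatype 'a xstr = Fin "'a list" | Sentinel

text \<open>Characters: the terminator, ordinary characters, and the character of the sentinel
(larger than everything). The sentinel is modelled as an infinite string of Top characters.\<close>
datatype 'a ch = Term | Chr 'a | Top

fun ch_le :: "'a::linorder ch \<Rightarrow> 'a ch \<Rightarrow> bool" where
  "ch_le Term _ = True"
| "ch_le (Chr x) Term = False"
| "ch_le (Chr x) (Chr y) = (x \<le> y)"
| "ch_le (Chr x) Top = True"
| "ch_le Top Top = True"
| "ch_le Top _ = False"

text \<open>charat s i is the character s[i] (1-based).\<close>
fun charat :: "'a xstr \<Rightarrow> nat \<Rightarrow> 'a ch" where
  "charat (Fin s) i = (if 1 \<le> i \<and> i \<le> length s then Chr (s ! (i - 1)) else Term)"
| "charat Sentinel i = Top"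

fun is_chr :: "'a ch \<Rightarrow> bool" where
  "is_chr (Chr _) = True"
| "is_chr _ = False"

fun xlen :: "'a xstr \<Rightarrow> nat" where
  "xlen (Fin s) = length s"
| "xlen Sentinel = 0"

function ext_lcp :: "'a xstr \<Rightarrow> 'a xstr \<Rightarrow> nat \<Rightarrow> nat" where
  "ext_lcp a b h =
     (if charat a (Suc h) = charat b (Suc h) \<and> is_chr (charat a (Suc h))
      then ext_lcp a b (Suc h) else h)"
  by pat_completeness auto
termination
  apply (relation "measure (\<lambda>(a, b, h). xlen a - h)")
   apply simp
  subgoal for a b h by (cases a) (auto split: if_splits)
  done

declare ext_lcp.simps [simp del]

text \<open>LCP-Compare. Returns (winner, lcp of winner, loser, lcp of loser, number of character
comparisons performed).\<close>
definition lcp_compare ::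
  "nat \<Rightarrow> 'a::linorder xstr \<Rightarrow> nat \<Rightarrow> nat \<Rightarrow> 'a xstr \<Rightarrow> nat \<Rightarrow> nat \<times> nat \<times> nat \<times> nat \<times> nat" where
  "lcp_compare a sa ha b sb hb =
     (if ha < hb then (b, hb, a, ha, 0)
      else if hb < ha then (a, ha, b, hb, 0)
      else (let h' = ext_lcp sa sb ha in
            if ch_le (charat sa (Suc h')) (charat sb (Suc h'))
            then (a, ha, b, h', h' - ha + 1)
            else (b, hb, a, h', h' - ha + 1)))"

text \<open>Inputs are numbered 1..K; input k is Ss!(k-1); pos k is the (0-based) index of the
current head of input k, which is the sentinel once the input is exhausted.\<close>
definition head :: "'a list list list \<Rightarrow> (nat \<Rightarrow> nat) \<Rightarrow> nat \<Rightarrow> 'a xstr" where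
  "head Ss pos k = (if pos k < length (Ss ! (k - 1)) then Fin (Ss ! (k - 1) ! pos k) else Sentinel)"

definition play ::
  "'a::linorder list list list \<Rightarrow> (nat \<Rightarrow> nat) \<Rightarrow> nat \<Rightarrow> nat \<Rightarrow> nat \<Rightarrow> (nat \<Rightarrow> nat) \<Rightarrow> (nat \<Rightarrow> nat) \<Rightarrow> nat
   \<Rightarrow> nat \<times> nat \<times> (nat \<Rightarrow> nat) \<times> (nat \<Rightarrow> nat) \<times> nat" where
  "play Ss pos x h u y hv c =
     (case lcp_compare x (head Ss pos x) h (y u) (head Ss pos (y u)) (hv u) of
        (x', h', yl, hl, d) \<Rightarrow> (x', h', y(u := yl), hv(u := hl), c + d))"

function climb_init ::
  "'a::linorder list list list \<Rightarrow> (nat \<Rightarrow> nat) \<Rightarrow> nat \<Rightarrow> nat \<Rightarrow> nat \<Rightarrow> (nat \<Rightarrow> nat) \<Rightarrow> (nat \<Rightarrow> nat) \<Rightarrow> nat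
   \<Rightarrow> nat \<times> nat \<times> nat \<times> (nat \<Rightarrow> nat) \<times> (nat \<Rightarrow> nat) \<times> nat" where
  "climb_init Ss pos x h v y hv c =
     (if even v \<and> 2 < v then
        (case play Ss pos x h (v div 2) y hv c of
           (x', h', y', hv', c') \<Rightarrow> climb_init Ss pos x' h' (v div 2) y' hv' c')
      else (x, h, v, y, hv, c))"
  by pat_completeness auto
termination
  by (relation "measure (\<lambda>(Ss, pos, x, h, v, y, hv, c). v)") auto

declare climb_init.simps [simp del]

function climb ::
  "'a::linorder list list list \<Rightarrow> (nat \<Rightarrow> nat) \<Rightarrow> nat \<Rightarrow> nat \<Rightarrow> nat \<Rightarrow> (nat \<Rightarrow> nat) \<Rightarrow> (nat \<Rightarrow> nat) \<Rightarrow> nat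
   \<Rightarrow> nat \<times> nat \<times> (nat \<Rightarrow> nat) \<times> (nat \<Rightarrow> nat) \<times> nat" where
  "climb Ss pos x h v y hv c =
     (if 2 < v then
        (case play Ss pos x h ((v + 1) div 2) y hv c of
           (x', h', y', hv', c') \<Rightarrow> climb Ss pos x' h' ((v + 1) div 2) y' hv' c')
      else (x, h, y, hv, c))"
  by pat_completeness auto
termination
  by (relation "measure (\<lambda>(Ss, pos, x, h, v, y, hv, c). v)") auto

declare climb.simps [simp del]

definition init_step ::
  "'a::linorder list list list \<Rightarrow> nat \<Rightarrow> nat \<Rightarrow> (nat \<Rightarrow> nat) \<times> (nat \<Rightarrow> nat) \<times> nat \<Rightarrow> nat
   \<Rightarrow> (nat \<Rightarrow> nat) \<times> (nat \<Rightarrow> nat) \<times> nat" where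
  "init_step Ss K hbar st k =
     (case st of (y, hv, c) \<Rightarrow>
       (case climb_init Ss (\<lambda>_. 0) k hbar (K + k) y hv c of
          (x, h, v, y', hv', c') \<Rightarrow> (y'((v + 1) div 2 := x), hv'((v + 1) div 2 := h), c')))"

text \<open>Merge state: (pos, y, hv, w, h_1, output so far, comparison count).\<close>
type_synonym 'a mstate =
  "(nat \<Rightarrow> nat) \<times> (nat \<Rightarrow> nat) \<times> (nat \<Rightarrow> nat) \<times> nat \<times> nat \<times> ('a xstr \<times> nat) list \<times> nat"

definition merge_init :: "'a::linorder list list list \<Rightarrow> nat \<Rightarrow> nat \<Rightarrow> 'a mstate" where
  "merge_init Ss K hbar =
     (case fold (\<lambda>k st. init_step Ss K hbar st k) [1..<K + 1] (\<lambda>_. 0, \<lambda>_. 0, 0) of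
        (y, hv, c) \<Rightarrow> ((\<lambda>_. 0), y, hv, y 1, hv 1, [], c))"

text \<open>One iteration of the main loop. The LCP entry of the sentinel (after the last string
of an input) is lcp(s_m, \<infinity>) = 0.\<close>
definition merge_step :: "'a::linorder list list list \<Rightarrow> nat list list \<Rightarrow> nat \<Rightarrow> 'a mstate \<Rightarrow> 'a mstate" where
  "merge_step Ss Hs K st =
     (case st of (pos, y, hv, w, h1, out, c) \<Rightarrow>
       (let out' = out @ [(head Ss pos w, h1)];
            pos' = pos(w := Suc (pos w));
            h = (if pos' w < length (Ss ! (w - 1)) then Hs ! (w - 1) ! (pos' w - 1) else 0)
        in (case climb Ss pos' w h (K + w) y hv c of
              (x, h', y', hv', c') \<Rightarrow> (pos', y', hv', x, h', out', c'))))"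

definition lcp_merge ::
  "nat \<Rightarrow> nat \<Rightarrow> 'a::linorder list list list \<Rightarrow> nat list list \<Rightarrow> ('a xstr \<times> nat) list \<times> nat" where
  "lcp_merge K hbar Ss Hs =
     (case (merge_step Ss Hs K ^^ sum_list (map length Ss)) (merge_init Ss K hbar) of
        (pos, y, hv, w, h1, out, c) \<Rightarrow> (out, c))"

end

theory Submission
  imports Defs
begin


lemma lcp_sym: "lcp s t = lcp t s"
  by (induction s t rule: lcp.induct) auto

lemma lcp_le_len: "lcp s t \<le> length s"
  by (induction s t rule: lcp.induct) auto

lemma lcp_ultra: "min (lcp r s) (lcp r t) \<le> lcp s t"
proof (induction r arbitrary: s t)
  case Nil then show ?case by simp
next
  case (Cons a r)
  show ?case
  proof (cases s)
    case (Cons b s')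
    show ?thesis
    proof (cases t)
      case (Cons c t')
      show ?thesis using Cons.IH[of s' t'] \<open>s = b # s'\<close> Cons by (auto simp: min_def split: if_splits)
    qed simp
  qed simp
qed

lemma lcp_lt_eq: "lcp r s < lcp r t \<Longrightarrow> lcp s t = lcp r s"
  using lcp_ultra[of r s t] lcp_ultra[of t r s] lcp_sym[of r t] lcp_sym[of s t]
  by (auto simp: min_def split: if_splits)

lemma lcp_lt_order: "r \<le> s \<Longrightarrow> lcp r s < lcp r t \<Longrightarrow> t \<le> s"
proof (induction r arbitrary: s t)
  case Nil then show ?case by simp
next
  case (Cons a r)
  then show ?case by (cases s; cases t) (auto split: if_splits)
qed

lemma lcp_order_char:
  "(s \<le> t) = ch_le (charat (Fin s) (Suc (lcp s t))) (charat (Fin t) (Suc (lcp s t)))"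
proof (induction s arbitrary: t)
  case Nil then show ?case by (cases t) auto
next
  case (Cons a s)
  show ?case
  proof (cases t)
    case Nil then show ?thesis by auto
  next
    case (Cons b t')
    show ?thesis
    proof (cases "a = b")
      case True
      have "charat (Fin (a # s)) (Suc (Suc i)) = charat (Fin s) (Suc i)" for i by auto
      moreover have "charat (Fin (b # t')) (Suc (Suc i)) = charat (Fin t') (Suc i)" for i by auto
      ultimately show ?thesis using Cons.IH[of t'] True Cons by simp
    next
      case False then show ?thesis using Cons by (auto simp: less_le)
    qed
  qed
qed

lemma lcp_nth_diff: "lcp s t < length s \<Longrightarrow> lcp s t < length t \<Longrightarrow> s ! lcp s t \<noteq> t ! lcp s t"
  by (induction s t rule: lcp.induct) auto

lemma lcp_nth_eq: "i < lcp s t \<Longrightarrow> i < length s \<and> i < length t \<and> s ! i = t ! i"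
proof (induction s t arbitrary: i rule: lcp.induct)
  case (1 x xs y ys) then show ?case by (cases i) (auto split: if_splits)
qed auto

lemma ext_lcp_Fin: "h \<le> lcp s t \<Longrightarrow> ext_lcp (Fin s) (Fin t) h = lcp s t"
proof (induction "lcp s t - h" arbitrary: h)
  case 0
  then have h: "h = lcp s t" by simp
  have "\<not> (charat (Fin s) (Suc h) = charat (Fin t) (Suc h) \<and> is_chr (charat (Fin s) (Suc h)))"
  proof
    assume a: "charat (Fin s) (Suc h) = charat (Fin t) (Suc h) \<and> is_chr (charat (Fin s) (Suc h))"
    then have "h < length s" "h < length t" "s ! h = t ! h"
      by (auto split: if_splits)
    then show False using h lcp_nth_diff[of s t] by auto
  qed
  then show ?case using h by (subst ext_lcp.simps) auto
next
  case (Suc x)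
  then have hl: "h < lcp s t" by simp
  from lcp_nth_eq[OF hl] have "charat (Fin s) (Suc h) = charat (Fin t) (Suc h) \<and> is_chr (charat (Fin s) (Suc h))"
    by auto
  then have "ext_lcp (Fin s) (Fin t) h = ext_lcp (Fin s) (Fin t) (Suc h)"
    by (subst ext_lcp.simps) auto
  also have "\<dots> = lcp s t" using Suc by simp
  finally show ?case .
qed

lemma prefix_lcp: "prefix P s \<Longrightarrow> lcp P s = length P"
proof (induction P arbitrary: s)
  case (Cons a P) then show ?case by (cases s) auto
qed simp

lemma prefix_lcp2: "prefix P s \<Longrightarrow> prefix P t \<Longrightarrow> length P \<le> lcp s t"
proof (induction P arbitrary: s t)
  case (Cons a P) then show ?case by (cases s; cases t) auto
qed simp

lemma prefix_le: "prefix P s \<Longrightarrow> P \<le> (s::'a::linorder list)"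
proof (induction P arbitrary: s)
  case (Cons a P) then show ?case by (cases s) auto
qed simp

lemma ext_lcp_ge: "h \<le> ext_lcp a b h"
proof (induction a b h rule: ext_lcp.induct)
  case (1 a b h) then show ?case by (subst ext_lcp.simps) auto
qed

lemma ext_lcp_Sent1: "ext_lcp Sentinel b h = h"
  by (subst ext_lcp.simps) auto
lemma ext_lcp_Sent2: "ext_lcp (Fin s) Sentinel h = h"
  by (subst ext_lcp.simps) (auto split: if_splits)




locale lm =
  fixes Ss :: "'a::linorder list list list" and Hs :: "nat list list" and K hbar m :: nat and P :: "'a list"
  assumes K: "K = 2^m" and lSs: "length Ss = K" and lHs: "length Hs = K"
    and srt: "\<forall>k<K. sorted (Ss!k)" and Hdef: "\<forall>k<K. Hs!k = lcp_array (Ss!k)"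
    and lP: "length P = hbar" and pre: "\<forall>k<K. \<forall>s\<in>set(Ss!k). prefix P s"
begin

definition sb :: "nat \<Rightarrow> nat" where "sb k = (if Ss!(k-1) = [] then hbar else 0)"

definition REL :: "(nat \<Rightarrow> 'a xstr) \<Rightarrow> 'a xstr \<Rightarrow> nat \<Rightarrow> nat \<Rightarrow> bool" where
  "REL hds rr k h = (case hds k of Fin s \<Rightarrow> (\<exists>r. rr = Fin r \<and> r \<le> s \<and> h = lcp r s) | Sentinel \<Rightarrow> h \<le> sb k)"

definition goodhd :: "(nat \<Rightarrow> 'a xstr) \<Rightarrow> bool" where
  "goodhd hds = (\<forall>k s. 1 \<le> k \<and> k \<le> K \<and> hds k = Fin s \<longrightarrow> prefix P s)"

lemma sb_le: "sb k \<le> hbar" by (simp add: sb_def)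

lemma ch_le_Top: "ch_le (charat (Fin s) i) Top"
  by auto
lemma ch_le_Top2: "\<not> ch_le Top (charat (Fin s) i)"
  by auto

lemma GC:
  assumes r: "prefix P r" and ka: "ka \<in> {1..K}" and kb: "kb \<in> {1..K}" and g: "goodhd hds"
    and ra: "REL hds (Fin r) ka ha" and rb: "REL hds (Fin r) kb hb"
    and eq: "lcp_compare ka (hds ka) ha kb (hds kb) hb = (x,hx,l,hl,d)"
  shows "((x = ka \<and> l = kb \<and> hx = ha) \<or> (x = kb \<and> l = ka \<and> hx = hb))
     \<and> REL hds (Fin r) x hx \<and> REL hds (hds x) l hl \<and> d + ha + hb \<le> 1 + hx + hl"
proof (cases "hds ka")
  case (Fin s)
  note sa = Fin
  have ps: "prefix P s" using g ka sa unfolding goodhd_def by auto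
  from ra sa have rs: "r \<le> s" "ha = lcp r s" unfolding REL_def by auto
  have hag: "hbar \<le> ha" using prefix_lcp2[OF r ps] rs lP by simp
  show ?thesis
  proof (cases "hds kb")
    case (Fin t)
    have pt: "prefix P t" using g kb Fin unfolding goodhd_def by auto
    from rb Fin have rt: "r \<le> t" "hb = lcp r t" unfolding REL_def by auto
    consider "ha < hb" | "hb < ha" | "ha = hb" by linarith
    then show ?thesis
    proof cases
      case 1
      then have "x = kb" "hx = hb" "l = ka" "hl = ha" "d = 0" using eq by (auto simp: lcp_compare_def)
      moreover have "lcp t s = ha" using lcp_lt_eq[of r s t] 1 rs rt lcp_sym[of s t] by simp
      moreover have "t \<le> s" using lcp_lt_order[of r s t] 1 rs rt by simp
      ultimately show ?thesis using rb sa Fin unfolding REL_def by auto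
    next
      case 2
      then have "x = ka" "hx = ha" "l = kb" "hl = hb" "d = 0" using eq by (auto simp: lcp_compare_def)
      moreover have "lcp s t = hb" using lcp_lt_eq[of r t s] 2 rs rt lcp_sym[of s t] by simp
      moreover have "s \<le> t" using lcp_lt_order[of r t s] 2 rs rt by simp
      ultimately show ?thesis using ra sa Fin unfolding REL_def by auto
    next
      case 3
      have "ha \<le> lcp s t" using lcp_ultra[of r s t] rs rt 3 by simp
      then have el0: "ext_lcp (Fin s) (Fin t) ha = lcp s t" by (rule ext_lcp_Fin)
      then have el: "ext_lcp (Fin s) (Fin t) hb = lcp s t" using 3 by simp
      show ?thesis
      proof (cases "s \<le> t")
        case True
        then have "ch_le (charat (Fin s) (Suc (lcp s t))) (charat (Fin t) (Suc (lcp s t)))"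
          using lcp_order_char by blast
        then have "lcp_compare ka (hds ka) ha kb (hds kb) hb = (ka, ha, kb, lcp s t, lcp s t - ha + 1)"
          by (simp add: lcp_compare_def Let_def sa Fin el 3 del: charat.simps)
        then have "x = ka" "hx = ha" "l = kb" "hl = lcp s t" "d = lcp s t - ha + 1"
          using eq by auto
        then show ?thesis using ra sa Fin True \<open>ha \<le> lcp s t\<close> 3 unfolding REL_def by auto
      next
        case False
        then have "\<not> ch_le (charat (Fin s) (Suc (lcp s t))) (charat (Fin t) (Suc (lcp s t)))"
          using lcp_order_char by blast
        then have "lcp_compare ka (hds ka) ha kb (hds kb) hb = (kb, hb, ka, lcp s t, lcp s t - ha + 1)"
          by (simp add: lcp_compare_def Let_def sa Fin el 3 del: charat.simps)
        then have "x = kb" "hx = hb" "l = ka" "hl = lcp s t" "d = lcp s t - ha + 1"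
          using eq by auto
        then show ?thesis using rb sa Fin False \<open>ha \<le> lcp s t\<close> 3 lcp_sym[of s t] unfolding REL_def by auto
      qed
    qed
  next
    case Sentinel
    have hbs: "hb \<le> sb kb" using rb Sentinel unfolding REL_def by auto
    then have "hb \<le> ha" using sb_le[of kb] hag by linarith
    then consider "hb < ha" | "hb = ha" by linarith
    then show ?thesis
    proof cases
      case 1
      then have "x = ka" "hx = ha" "l = kb" "hl = hb" "d = 0" using eq by (auto simp: lcp_compare_def)
      then show ?thesis using ra sa Sentinel hbs unfolding REL_def by auto
    next
      case 2
      then have "x = ka" "hx = ha" "l = kb" "hl = ha" "d = 1"
        using eq sa Sentinel by (auto simp: lcp_compare_def Let_def ext_lcp_Sent2 ch_le_Top simp del: charat.simps(1))
      then show ?thesis using ra sa Sentinel hbs 2 unfolding REL_def by auto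
    qed
  qed
next
  case Sentinel
  note sa = Sentinel
  have has: "ha \<le> sb ka" using ra sa unfolding REL_def by auto
  show ?thesis
  proof (cases "hds kb")
    case (Fin t)
    have pt: "prefix P t" using g kb Fin unfolding goodhd_def by auto
    from rb Fin have rt: "r \<le> t" "hb = lcp r t" unfolding REL_def by auto
    have "hbar \<le> hb" using prefix_lcp2[OF r pt] rt lP by simp
    then have "ha \<le> hb" using sb_le[of ka] has by linarith
    then consider "ha < hb" | "hb = ha" by linarith
    then show ?thesis
    proof cases
      case 1
      then have "x = kb" "hx = hb" "l = ka" "hl = ha" "d = 0" using eq by (auto simp: lcp_compare_def)
      then show ?thesis using rb sa Fin has unfolding REL_def by auto
    next
      case 2
      then have "x = kb" "hx = hb" "l = ka" "hl = ha" "d = 1"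
        using eq sa Fin by (auto simp: lcp_compare_def Let_def ext_lcp_Sent1 ch_le_Top2 simp del: charat.simps(1))
      then show ?thesis using rb sa Fin has 2 unfolding REL_def by auto
    qed
  next
    case Sentinel
    have hbs: "hb \<le> sb kb" using rb Sentinel unfolding REL_def by auto
    consider "ha < hb" | "hb < ha" | "ha = hb" by linarith
    then show ?thesis
    proof cases
      case 1
      then have "x = kb" "hx = hb" "l = ka" "hl = ha" "d = 0" using eq by (auto simp: lcp_compare_def)
      then show ?thesis using sa Sentinel has hbs unfolding REL_def by auto
    next
      case 2
      then have "x = ka" "hx = ha" "l = kb" "hl = hb" "d = 0" using eq by (auto simp: lcp_compare_def)
      then show ?thesis using sa Sentinel has hbs unfolding REL_def by auto
    next
      case 3
      then have "x = ka" "hx = ha" "l = kb" "hl = ha" "d = 1"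
        using eq sa Sentinel by (auto simp: lcp_compare_def Let_def ext_lcp_Sent1 ch_le_Top2 simp del: charat.simps(1))
      then show ?thesis using sa Sentinel has hbs 3 unfolding REL_def by auto
    qed
  qed
qed

end



context lm begin

definition inT :: "nat \<Rightarrow> nat \<Rightarrow> nat set" where
  "inT j t = {v. 1 \<le> v \<and> (\<exists>s<t. (v-1) div 2^s = j)}"

definition lvs :: "nat \<Rightarrow> nat \<Rightarrow> nat set" where
  "lvs j t = {k. 1 \<le> k \<and> (K+k-1) div 2^t = j}"

definition WF :: "nat \<Rightarrow> nat \<Rightarrow> bool" where
  "WF j t = (K \<le> j * 2^t \<and> (j+1)*2^t \<le> 2*K \<and> 1 \<le> j)"

fun win :: "(nat \<Rightarrow> nat) \<Rightarrow> nat \<Rightarrow> nat \<Rightarrow> nat" where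
  "win y j 0 = j + 1 - K"
| "win y j (Suc t) = (let a = win y (2*j) t; b = win y (2*j+1) t in if y (j+1) = a then b else a)"

fun valid :: "(nat \<Rightarrow> 'a xstr) \<Rightarrow> (nat\<Rightarrow>nat) \<Rightarrow> (nat\<Rightarrow>nat) \<Rightarrow> nat \<Rightarrow> nat \<Rightarrow> bool" where
  "valid hds y hv j 0 = True"
| "valid hds y hv j (Suc t) = (valid hds y hv (2*j) t \<and> valid hds y hv (2*j+1) t
     \<and> y (j+1) \<in> {win y (2*j) t, win y (2*j+1) t}
     \<and> REL hds (hds (win y j (Suc t))) (y (j+1)) (hv (j+1)))"

definition xle :: "'a xstr \<Rightarrow> 'a xstr \<Rightarrow> bool" where
  "xle a b = (case b of Sentinel \<Rightarrow> True | Fin t \<Rightarrow> (\<exists>s. a = Fin s \<and> s \<le> t))"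

lemma xle_trans: "xle a b \<Longrightarrow> xle b c \<Longrightarrow> xle a c"
  by (auto simp: xle_def split: xstr.splits)

lemma xle_refl: "xle a a"
  by (auto simp: xle_def split: xstr.splits)

lemma REL_xle: "REL hds rr k h \<Longrightarrow> xle rr (hds k)"
  by (auto simp: REL_def xle_def split: xstr.splits)

lemma REL_cong: "hds k = hds' k \<Longrightarrow> REL hds rr k h = REL hds' rr k h"
  by (simp add: REL_def)

lemma div2_eq: "(q::nat) div 2 = j \<longleftrightarrow> q = 2*j \<or> q = 2*j+1"
  by presburger

lemma div2s_eq: "(q::nat) div 2^Suc s = j \<longleftrightarrow> q div 2^s = 2*j \<or> q div 2^s = 2*j+1"
  by (simp only: power_Suc2 div_mult2_eq div2_eq)

lemma inT_0[simp]: "inT j 0 = {}"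
  by (simp add: inT_def)

lemma inT_Suc: "inT j (Suc t) = insert (j+1) (inT (2*j) t \<union> inT (2*j+1) t)"
proof -
  have "(\<exists>s<Suc t. (v-1) div 2^s = j) \<longleftrightarrow> (v - 1 = j \<or> (\<exists>s<t. (v-1) div 2^s = 2*j) \<or> (\<exists>s<t. (v-1) div 2^s = 2*j+1))" for v
  proof -
    have "(\<exists>s<Suc t. (v-1) div 2^s = j) \<longleftrightarrow> (v - 1 = j \<or> (\<exists>s<t. (v-1) div 2^Suc s = j))"
      by (metis (no_types, lifting) One_nat_def div_by_1 less_Suc_eq_0_disj not_less_eq power_0)
    also have "(\<exists>s<t. (v-1) div 2^Suc s = j) \<longleftrightarrow> (\<exists>s<t. (v-1) div 2^s = 2*j \<or> (v-1) div 2^s = 2*j+1)"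
    proof -
      have "(v-1) div 2^Suc s = j \<longleftrightarrow> ((v-1) div 2^s = 2*j \<or> (v-1) div 2^s = 2*j+1)" for s
        by (rule div2s_eq)
      then show ?thesis by simp
    qed
    finally show ?thesis by blast
  qed
  then show ?thesis unfolding inT_def by auto
qed

lemma lt_div_succ: "0 < (d::nat) \<Longrightarrow> n < (n div d + 1) * d"
proof -
  assume d: "0 < d"
  have "n div d * d + n mod d = n" by (rule div_mult_mod_eq)
  moreover have "n mod d < d" using d by simp
  moreover have "(n div d + 1) * d = n div d * d + d" by (simp add: distrib_right)
  ultimately show ?thesis by linarith
qed

lemma inT_fin: "finite (inT j t)"
proof -
  have "inT j t \<subseteq> {..(j+1)*2^t}"
  proof
    fix v assume "v \<in> inT j t"
    then obtain s where s: "s < t" "1 \<le> v" "(v-1) div 2^s = j" unfolding inT_def by auto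
    then have "v - 1 < (j+1) * 2^s" using lt_div_succ[of "2^s" "v-1"] by simp
    moreover have "(j+1)*2^s \<le> (j+1)*2^t" using s by (intro mult_le_mono2 power_increasing) auto
    ultimately show "v \<in> {..(j+1)*2^t}" by simp
  qed
  then show ?thesis using finite_subset by blast
qed

lemma div_pow_mono: "(a::nat) div 2^s = b \<Longrightarrow> s \<le> s' \<Longrightarrow> a div 2^s' = b div 2^(s'-s)"
proof -
  assume a: "a div 2^s = b" "s \<le> s'"
  then have "(2::nat)^s' = 2^s * 2^(s'-s)" by (simp add: power_add[symmetric])
  then show ?thesis using a by (simp add: div_mult2_eq)
qed

lemma inT_ge: "v \<in> inT j t \<Longrightarrow> j + 1 \<le> v"
proof -
  assume "v \<in> inT j t"
  then obtain s where "1 \<le> v" "(v-1) div 2^s = j" unfolding inT_def by auto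
  moreover have "(v-1) div 2^s \<le> v - 1" by (rule div_le_dividend)
  ultimately show ?thesis by simp
qed

lemma inT_disj:
  assumes "1 \<le> j"
  shows "inT (2*j) t \<inter> inT (2*j+1) t = {}" "j+1 \<notin> inT (2*j) t" "j+1 \<notin> inT (2*j+1) t"
proof -
  show "j+1 \<notin> inT (2*j) t" "j+1 \<notin> inT (2*j+1) t" using inT_ge[of "j+1"] assms by fastforce+
  show "inT (2*j) t \<inter> inT (2*j+1) t = {}"
  proof (rule ccontr)
    assume "inT (2*j) t \<inter> inT (2*j+1) t \<noteq> {}"
    then obtain v s s' where a: "(v-1) div 2^s = 2*j" "(v-1) div 2^s' = 2*j+1" unfolding inT_def by auto
    show False
    proof (cases "s \<le> s'")
      case True
      from div_pow_mono[OF a(1) True] a(2) have "(2*j) div 2^(s'-s) = 2*j+1" by simp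
      moreover have "(2*j) div 2^(s'-s) \<le> 2*j" by (rule div_le_dividend)
      ultimately show False by simp
    next
      case False
      then have "s' \<le> s" by simp
      from div_pow_mono[OF a(2) this] a(1) have "(2*j+1) div 2^(s-s') = 2*j" by simp
      moreover have "s - s' \<ge> 1" using False by simp
      then have "(2::nat) \<le> 2^(s-s')"
        using power_increasing[of 1 "s-s'" "2::nat"] by simp
      then have "(2*j+1) div 2^(s-s') \<le> (2*j+1) div 2" by (rule div_le_mono2[rotated]) simp
      ultimately show False using assms by simp
    qed
  qed
qed

lemma lvs_Suc: "lvs j (Suc t) = lvs (2*j) t \<union> lvs (2*j+1) t"
proof -
  have "(K+k-1) div 2^Suc t = j \<longleftrightarrow> ((K+k-1) div 2^t = 2*j \<or> (K+k-1) div 2^t = 2*j+1)" for k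
    by (rule div2s_eq)
  then show ?thesis unfolding lvs_def by auto
qed

lemma lvs_disj: "lvs (2*j) t \<inter> lvs (2*j+1) t = {}"
  unfolding lvs_def by auto

lemma lvs_0: "K \<le> j \<Longrightarrow> lvs j 0 = {j+1-K}"
  unfolding lvs_def by auto

lemma lvs_fin: "finite (lvs j t)"
proof -
  have "lvs j t \<subseteq> {..(j+1)*2^t + K}"
  proof
    fix k assume "k \<in> lvs j t"
    then have "(K+k-1) div 2^t = j" "1 \<le> k" unfolding lvs_def by auto
    then have "K+k-1 < (j+1)*2^t" using lt_div_succ[of "2^t" "K+k-1"] by simp
    then show "k \<in> {..(j+1)*2^t + K}" by simp
  qed
  then show ?thesis using finite_subset by blast
qed

lemma WF_ch: "WF j (Suc t) \<Longrightarrow> WF (2*j) t \<and> WF (2*j+1) t"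
  unfolding WF_def by (auto simp: power_Suc)

lemma lvs_sub: "WF j t \<Longrightarrow> lvs j t \<subseteq> {1..K}"
proof
  fix k assume w: "WF j t" and k: "k \<in> lvs j t"
  then have "(K+k-1) div 2^t = j" "1 \<le> k" unfolding lvs_def by auto
  then have "K + k - 1 < (j+1)*2^t" using lt_div_succ[of "2^t" "K+k-1"] by simp
  then show "k \<in> {1..K}" using w \<open>1 \<le> k\<close> unfolding WF_def by auto
qed

lemma win_in: "WF j t \<Longrightarrow> win y j t \<in> lvs j t"
proof (induction t arbitrary: j)
  case 0 then show ?case unfolding WF_def by (simp add: lvs_0)
next
  case (Suc t)
  then show ?case using WF_ch[OF Suc.prems] by (auto simp: Let_def lvs_Suc)
qed

lemma win_local: "(\<forall>v\<in>inT j t. y v = y' v) \<Longrightarrow> win y j t = win y' j t"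
proof (induction t arbitrary: j)
  case (Suc t) then show ?case by (simp add: inT_Suc Let_def)
qed simp

lemma valid_local:
  "valid hds y hv j t \<Longrightarrow> WF j t \<Longrightarrow> (\<forall>v\<in>inT j t. y v = y' v \<and> hv v = hv' v)
   \<Longrightarrow> (\<forall>k\<in>lvs j t. hds k = hds' k) \<Longrightarrow> valid hds' y' hv' j t"
proof (induction t arbitrary: j)
  case (Suc t)
  have w: "WF (2*j) t" "WF (2*j+1) t" using WF_ch[OF Suc.prems(2)] by auto
  have wl: "win y (2*j) t = win y' (2*j) t" "win y (2*j+1) t = win y' (2*j+1) t"
    "win y j (Suc t) = win y' j (Suc t)"
    using win_local[of _ t y y'] win_local[of j "Suc t" y y'] Suc.prems(3) by (auto simp: inT_Suc)
  have wi: "win y j (Suc t) \<in> lvs j (Suc t)" using win_in Suc.prems(2) by blast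
  have yi: "y (j+1) \<in> lvs j (Suc t)" using Suc.prems(1) win_in[OF w(1)] win_in[OF w(2)]
    by (auto simp: lvs_Suc)
  have v1: "valid hds' y' hv' (2*j) t" "valid hds' y' hv' (2*j+1) t"
    using Suc.IH[OF _ w(1)] Suc.IH[OF _ w(2)] Suc.prems by (auto simp: inT_Suc lvs_Suc)
  have yy: "y (j+1) = y' (j+1)" "hv (j+1) = hv' (j+1)" using Suc.prems(3) by (auto simp: inT_Suc)
  have hw: "hds (win y j (Suc t)) = hds' (win y' j (Suc t))" using wi wl(3) Suc.prems(4) by auto
  have rel: "REL hds (hds (win y j (Suc t))) (y (j+1)) (hv (j+1))" using Suc.prems(1) by simp
  have "REL hds' (hds' (win y' j (Suc t))) (y' (j+1)) (hv' (j+1))"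
    using rel hw yy REL_cong[of hds "y (j+1)" hds'] yi Suc.prems(4) by auto
  moreover have "y' (j+1) \<in> {win y' (2*j) t, win y' (2*j+1) t}" using Suc.prems(1) yy wl by auto
  ultimately show ?case using v1 by simp
qed simp

lemma valid_min: "valid hds y hv j t \<Longrightarrow> WF j t \<Longrightarrow> \<forall>k\<in>lvs j t. xle (hds (win y j t)) (hds k)"
proof (induction t arbitrary: j)
  case 0 then show ?case unfolding WF_def by (simp add: lvs_0 xle_refl)
next
  case (Suc t)
  have w: "WF (2*j) t" "WF (2*j+1) t" using WF_ch[OF Suc.prems(2)] by auto
  let ?a = "win y (2*j) t" and ?b = "win y (2*j+1) t"
  have r: "xle (hds (win y j (Suc t))) (hds (y (j+1)))" using Suc.prems(1) REL_xle by auto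
  have ia: "\<forall>k\<in>lvs (2*j) t. xle (hds ?a) (hds k)" and ib: "\<forall>k\<in>lvs (2*j+1) t. xle (hds ?b) (hds k)"
    using Suc.IH w Suc.prems(1) by auto
  have "y (j+1) = ?a \<and> win y j (Suc t) = ?b \<or> y (j+1) = ?b \<and> win y j (Suc t) = ?a"
    using Suc.prems(1) by (auto simp: Let_def)
  then show ?case using r ia ib xle_trans by (auto simp: lvs_Suc)
qed

lemma valid_sum: "valid hds y hv j t \<Longrightarrow> WF j t \<Longrightarrow>
   (\<Sum>v\<in>inT j t. f (y v)) + f (win y j t) = (\<Sum>k\<in>lvs j t. (f k::nat))"
proof (induction t arbitrary: j)
  case 0 then show ?case unfolding WF_def by (simp add: lvs_0)
next
  case (Suc t)
  have w: "WF (2*j) t" "WF (2*j+1) t" using WF_ch[OF Suc.prems(2)] by auto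
  have j1: "1 \<le> j" using Suc.prems(2) unfolding WF_def by simp
  note d = inT_disj[OF j1, of t]
  have "(\<Sum>v\<in>inT j (Suc t). f (y v)) = f (y (j+1)) + (\<Sum>v\<in>inT (2*j) t. f (y v)) + (\<Sum>v\<in>inT (2*j+1) t. f (y v))"
    unfolding inT_Suc using d inT_fin by (simp add: sum.union_disjoint)
  moreover have "(\<Sum>k\<in>lvs j (Suc t). f k) = (\<Sum>k\<in>lvs (2*j) t. f k) + (\<Sum>k\<in>lvs (2*j+1) t. f k)"
    unfolding lvs_Suc using lvs_disj lvs_fin by (simp add: sum.union_disjoint)
  moreover have "f (y (j+1)) + f (win y j (Suc t)) = f (win y (2*j) t) + f (win y (2*j+1) t)"
    using Suc.prems(1) by (auto simp: Let_def)
  ultimately show ?case using Suc.IH[OF _ w(1)] Suc.IH[OF _ w(2)] Suc.prems(1) by simp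
qed

lemma valid_sent: "valid hds y hv j t \<Longrightarrow> WF j t \<Longrightarrow> (\<forall>k\<in>lvs j t. hds k = Sentinel)
   \<Longrightarrow> \<forall>v\<in>inT j t. hv v \<le> sb (y v)"
proof (induction t arbitrary: j)
  case (Suc t)
  have w: "WF (2*j) t" "WF (2*j+1) t" using WF_ch[OF Suc.prems(2)] by auto
  have yi: "y (j+1) \<in> lvs j (Suc t)" using Suc.prems(1) win_in[OF w(1)] win_in[OF w(2)]
    by (auto simp: lvs_Suc)
  then have "hds (y (j+1)) = Sentinel" using Suc.prems(3) by auto
  then have "hv (j+1) \<le> sb (y (j+1))" using Suc.prems(1) by (auto simp: REL_def)
  then show ?case using Suc.IH[OF _ w(1)] Suc.IH[OF _ w(2)] Suc.prems by (auto simp: inT_Suc lvs_Suc)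
qed simp

end



context lm begin

lemma goodhd_head: "goodhd (head Ss pos)"
  unfolding goodhd_def
proof (intro allI impI)
  fix k s assume a: "1 \<le> k \<and> k \<le> K \<and> head Ss pos k = Fin s"
  then have "pos k < length (Ss!(k-1))" "s = Ss!(k-1)!pos k" unfolding head_def by (auto split: if_splits)
  then have "s \<in> set (Ss!(k-1))" by simp
  moreover have "k - 1 < K" using a by linarith
  ultimately show "prefix P s" using pre by blast
qed

fun tb :: "nat \<Rightarrow> nat \<Rightarrow> (nat\<Rightarrow>nat) \<times> (nat\<Rightarrow>nat) \<times> nat \<Rightarrow> nat \<times> nat \<times> (nat\<Rightarrow>nat) \<times> (nat\<Rightarrow>nat) \<times> nat" where
  "tb j 0 (y,hv,c) = (j+1-K, hbar, y, hv, c)"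
| "tb j (Suc t) (y,hv,c) = (case tb (2*j) t (y,hv,c) of (xl,hl,y1,hv1,c1) \<Rightarrow>
      case tb (2*j+1) t (y1(j+1:=xl), hv1(j+1:=hl), c1) of (xr,hr,y2,hv2,c2) \<Rightarrow>
      play Ss (\<lambda>_. 0) xr hr (j+1) y2 hv2 c2)"

definition sc :: "nat \<Rightarrow> nat \<times> nat \<times> (nat\<Rightarrow>nat) \<times> (nat\<Rightarrow>nat) \<times> nat \<Rightarrow> (nat\<Rightarrow>nat) \<times> (nat\<Rightarrow>nat) \<times> nat" where
  "sc v st = (case st of (x,h,y,hv,c) \<Rightarrow> (case climb_init Ss (\<lambda>_. 0) x h v y hv c of
     (x',h',v',y',hv',c') \<Rightarrow> (y'((v'+1) div 2 := x'), hv'((v'+1) div 2 := h'), c')))"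

lemma sc_odd: "odd v \<Longrightarrow> sc v (x,h,y,hv,c) = (y((v+1) div 2 := x), hv((v+1) div 2 := h), c)"
  unfolding sc_def by (subst climb_init.simps) simp

lemma sc_even: "even v \<Longrightarrow> 2 < v \<Longrightarrow> sc v (x,h,y,hv,c) = sc (v div 2) (play Ss (\<lambda>_. 0) x h (v div 2) y hv c)"
  unfolding sc_def
  by (subst climb_init.simps) (simp split: prod.splits)

lemma upt_split: "a \<le> b \<Longrightarrow> b \<le> c \<Longrightarrow> [a..<c] = [a..<b] @ [b..<c]"
  by (metis le_add_diff_inverse upt_add_eq_append)

lemma fold_tb:
  "WF j t \<Longrightarrow> fold (\<lambda>k st. init_step Ss K hbar st k) [j*2^t - K + 1 ..< (j+1)*2^t - K + 1] (y,hv,c)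
     = sc (j+1) (tb j t (y,hv,c))"
proof (induction t arbitrary: j y hv c)
  case 0
  then have "K \<le> j" unfolding WF_def by simp
  then have l: "[j*2^0 - K + 1 ..< (j+1)*2^0 - K + 1] = [j+1-K]" by (simp add: upt_rec Suc_diff_le)
  show ?case unfolding l using \<open>K \<le> j\<close> by (simp add: init_step_def sc_def)
next
  case (Suc t)
  have w: "WF (2*j) t" "WF (2*j+1) t" using WF_ch[OF Suc.prems] by auto
  have K1: "K \<le> j * 2^Suc t" "1 \<le> j" using Suc.prems unfolding WF_def by auto
  have split: "[j*2^Suc t - K + 1 ..< (j+1)*2^Suc t - K + 1] =
     [(2*j)*2^t - K + 1 ..< (2*j+1)*2^t - K + 1] @ [(2*j+1)*2^t - K + 1 ..< (2*j+1+1)*2^t - K + 1]"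
  proof -
    have a: "(2*j)*2^t - K + 1 \<le> (2*j+1)*2^t - K + 1" by (simp add: diff_le_mono)
    have b: "(2*j+1)*2^t - K + 1 \<le> (2*j+1+1)*2^t - K + 1" by (simp add: diff_le_mono)
    have e: "j*2^Suc t = (2*j)*2^t" "(j+1)*2^Suc t = (2*j+1+1)*2^t" by (simp_all add: power_Suc)
    show ?thesis unfolding e by (rule upt_split[OF a b])
  qed
  obtain xl hl y1 hv1 c1 where t1: "tb (2*j) t (y,hv,c) = (xl,hl,y1,hv1,c1)" by (cases "tb (2*j) t (y,hv,c)") auto
  obtain xr hr y2 hv2 c2 where t2: "tb (2*j+1) t (y1(j+1:=xl), hv1(j+1:=hl), c1) = (xr,hr,y2,hv2,c2)"
    by (cases "tb (2*j+1) t (y1(j+1:=xl), hv1(j+1:=hl), c1)") auto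
  have "fold (\<lambda>k st. init_step Ss K hbar st k) [j*2^Suc t - K + 1 ..< (j+1)*2^Suc t - K + 1] (y,hv,c)
     = fold (\<lambda>k st. init_step Ss K hbar st k) [(2*j+1)*2^t - K + 1 ..< (2*j+1+1)*2^t - K + 1]
        (sc (2*j+1) (tb (2*j) t (y,hv,c)))"
    unfolding split fold_append comp_def using Suc.IH[OF w(1)] by simp
  also have "sc (2*j+1) (tb (2*j) t (y,hv,c)) = (y1(j+1:=xl), hv1(j+1:=hl), c1)"
    unfolding t1 by (simp add: sc_odd)
  also have "fold (\<lambda>k st. init_step Ss K hbar st k) [(2*j+1)*2^t - K + 1 ..< (2*j+1+1)*2^t - K + 1]
     (y1(j+1:=xl), hv1(j+1:=hl), c1) = sc (2*j+1+1) (xr,hr,y2,hv2,c2)"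
    by (subst Suc.IH[OF w(2)]) (simp only: t2)
  also have "\<dots> = sc (j+1) (play Ss (\<lambda>_. 0) xr hr (j+1) y2 hv2 c2)"
    using sc_even[of "2*j+1+1"] K1 by simp
  also have "\<dots> = sc (j+1) (tb j (Suc t) (y,hv,c))" using t1 t2 by simp
  finally show ?case .
qed

lemma rel_init: "k \<in> {1..K} \<Longrightarrow> REL (head Ss (\<lambda>_. 0)) (Fin P) k hbar"
proof -
  assume k: "k \<in> {1..K}"
  show ?thesis
  proof (cases "Ss!(k-1) = []")
    case True then show ?thesis by (simp add: REL_def head_def sb_def)
  next
    case False
    then have "Ss!(k-1)!0 \<in> set (Ss!(k-1))" by simp
    moreover have "k - 1 < K" using k by auto
    ultimately have p: "prefix P (Ss!(k-1)!0)" using pre by blast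
    show ?thesis using False prefix_le[OF p] prefix_lcp[OF p] lP by (simp add: REL_def head_def)
  qed
qed

lemma tb_ok:
  "WF j t \<Longrightarrow> tb j t (y,hv,c) = (x,h,y',hv',c') \<Longrightarrow>
    valid (head Ss (\<lambda>_. 0)) y' hv' j t \<and> win y' j t = x \<and> REL (head Ss (\<lambda>_. 0)) (Fin P) x h
    \<and> (\<forall>v. v \<notin> inT j t \<longrightarrow> y' v = y v \<and> hv' v = hv v)
    \<and> c' + 2^t*hbar + 1 \<le> c + h + (\<Sum>v\<in>inT j t. hv' v) + 2^t"
proof (induction t arbitrary: j y hv c x h y' hv' c')
  case 0
  then have "x = j+1-K" "h = hbar" "y' = y" "hv' = hv" "c' = c" by auto
  moreover have "x \<in> {1..K}" using 0 \<open>x = j+1-K\<close> unfolding WF_def by auto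
  ultimately show ?case using rel_init by simp
next
  case (Suc t)
  let ?hd = "head Ss (\<lambda>_. 0)"
  have w: "WF (2*j) t" "WF (2*j+1) t" using WF_ch[OF Suc.prems(1)] by auto
  have j1: "1 \<le> j" using Suc.prems(1) unfolding WF_def by simp
  note dj = inT_disj[OF j1, of t]
  obtain xl hl y1 hv1 c1 where t1: "tb (2*j) t (y,hv,c) = (xl,hl,y1,hv1,c1)" by (cases "tb (2*j) t (y,hv,c)") auto
  obtain xr hr y2 hv2 c2 where t2: "tb (2*j+1) t (y1(j+1:=xl), hv1(j+1:=hl), c1) = (xr,hr,y2,hv2,c2)"
    by (cases "tb (2*j+1) t (y1(j+1:=xl), hv1(j+1:=hl), c1)") auto
  note I1 = Suc.IH[OF w(1) t1] and I2 = Suc.IH[OF w(2) t2]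
  have y2j: "y2 (j+1) = xl" "hv2 (j+1) = hl" using I2 dj by auto
  obtain xw hw l hl' d where gc: "lcp_compare xr (?hd xr) hr xl (?hd xl) hl = (xw,hw,l,hl',d)"
    by (cases "lcp_compare xr (?hd xr) hr xl (?hd xl) hl") auto
  have res: "x = xw" "h = hw" "y' = y2(j+1 := l)" "hv' = hv2(j+1 := hl')" "c' = c2 + d"
    using Suc.prems(2) t1 t2 gc y2j by (auto simp: play_def)
  have xlin: "xl \<in> lvs (2*j) t" using win_in[OF w(1)] I1 by blast
  have xrin: "xr \<in> lvs (2*j+1) t" using win_in[OF w(2)] I2 by blast
  have xlK: "xl \<in> {1..K}" "xr \<in> {1..K}" using lvs_sub[OF w(1)] lvs_sub[OF w(2)] xlin xrin by auto
  have neq: "xl \<noteq> xr" using xlin xrin lvs_disj by blast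
  have G: "((xw = xr \<and> l = xl \<and> hw = hr) \<or> (xw = xl \<and> l = xr \<and> hw = hl))
     \<and> REL ?hd (Fin P) xw hw \<and> REL ?hd (?hd xw) l hl' \<and> d + hr + hl \<le> 1 + hw + hl'"
    using GC[OF prefix_order.refl xlK(2) xlK(1) goodhd_head _ _ gc] I1 I2 by blast
  have ag1: "\<forall>v\<in>inT (2*j) t. y' v = y1 v \<and> hv' v = hv1 v"
    using res I2 dj by auto
  have ag2: "\<forall>v\<in>inT (2*j+1) t. y' v = y2 v \<and> hv' v = hv2 v"
    using res dj by auto
  have v1: "valid ?hd y' hv' (2*j) t"
    using valid_local[OF _ w(1) _] I1 ag1 by auto
  have v2: "valid ?hd y' hv' (2*j+1) t"
    using valid_local[OF _ w(2) _] I2 ag2 by auto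
  have wl: "win y' (2*j) t = xl" using win_local[of "2*j" t y' y1] ag1 I1 by auto
  have wr: "win y' (2*j+1) t = xr" using win_local[of "2*j+1" t y' y2] ag2 I2 by auto
  have yj: "y' (j+1) = l" using res by simp
  have wj: "win y' j (Suc t) = xw" using wl wr yj G neq by (auto simp: Let_def)
  have val: "valid ?hd y' hv' j (Suc t)"
    using v1 v2 wl wr yj wj G res by auto
  have out: "\<forall>v. v \<notin> inT j (Suc t) \<longrightarrow> y' v = y v \<and> hv' v = hv v"
    using res I1 I2 by (auto simp: inT_Suc)
  have s: "(\<Sum>v\<in>inT j (Suc t). hv' v) = hl' + (\<Sum>v\<in>inT (2*j) t. hv1 v) + (\<Sum>v\<in>inT (2*j+1) t. hv2 v)"
  proof -
    have "(\<Sum>v\<in>inT j (Suc t). hv' v) = hv' (j+1) + (\<Sum>v\<in>inT (2*j) t. hv' v) + (\<Sum>v\<in>inT (2*j+1) t. hv' v)"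
      unfolding inT_Suc using dj inT_fin by (simp add: sum.union_disjoint)
    moreover have "(\<Sum>v\<in>inT (2*j) t. hv' v) = (\<Sum>v\<in>inT (2*j) t. hv1 v)" using ag1 by simp
    moreover have "(\<Sum>v\<in>inT (2*j+1) t. hv' v) = (\<Sum>v\<in>inT (2*j+1) t. hv2 v)" using ag2 by simp
    ultimately show ?thesis using res by simp
  qed
  have c1: "c1 + 2^t*hbar + 1 \<le> c + hl + (\<Sum>v\<in>inT (2*j) t. hv1 v) + 2^t" using I1 by blast
  have c2: "c2 + 2^t*hbar + 1 \<le> c1 + hr + (\<Sum>v\<in>inT (2*j+1) t. hv2 v) + 2^t" using I2 by blast
  have cost: "c' + 2^Suc t*hbar + 1 \<le> c + h + (\<Sum>v\<in>inT j (Suc t). hv' v) + 2^Suc t"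
    using c1 c2 G res s by (simp add: power_Suc)
  show ?case using val wj G res out cost by blast
qed

end



context lm begin

fun pp :: "(nat \<Rightarrow> nat) \<Rightarrow> nat \<Rightarrow> nat \<Rightarrow> nat \<times> nat \<times> (nat\<Rightarrow>nat) \<times> (nat\<Rightarrow>nat) \<times> nat
    \<Rightarrow> nat \<times> nat \<times> (nat\<Rightarrow>nat) \<times> (nat\<Rightarrow>nat) \<times> nat" where
  "pp pos l 0 st = st"
| "pp pos l (Suc t) st = (case pp pos l t st of (x,h,y,hv,c) \<Rightarrow> play Ss pos x h (l div 2^Suc t + 1) y hv c)"

lemma climb_pp:
  "1 \<le> l div 2^t \<Longrightarrow> climb Ss pos x h (l+1) y hv c =
     (case pp pos l t (x,h,y,hv,c) of (x',h',y',hv',c') \<Rightarrow> climb Ss pos x' h' (l div 2^t + 1) y' hv' c')"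
proof (induction t)
  case 0 then show ?case by simp
next
  case (Suc t)
  let ?u = "l div 2^t"
  have e: "l div 2^Suc t = ?u div 2" by (simp only: power_Suc2 div_mult2_eq)
  then have u2: "2 \<le> ?u" using Suc.prems by linarith
  have IH: "climb Ss pos x h (l+1) y hv c =
     (case pp pos l t (x,h,y,hv,c) of (x',h',y',hv',c') \<Rightarrow> climb Ss pos x' h' (?u + 1) y' hv' c')"
    using Suc.IH u2 by simp
  have step: "climb Ss pos x' h' (Suc ?u) y' hv' c' =
     (case play Ss pos x' h' (Suc (?u div 2)) y' hv' c' of (x2,h2,y2,hv2,c2) \<Rightarrow> climb Ss pos x2 h2 (Suc (?u div 2)) y2 hv2 c2)"
    for x' h' y' hv' c'
  proof -
    have "(?u + 1 + 1) div 2 = ?u div 2 + 1" by simp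
    then show ?thesis using u2 by (subst climb.simps) (simp split: prod.splits)
  qed
  have e2: "l div (2 * 2^t) = ?u div 2" using e by simp
  show ?case unfolding IH e by (simp add: step e2 split: prod.splits)
qed

lemma sum_inT_Suc: "1 \<le> j \<Longrightarrow> (\<Sum>v\<in>inT j (Suc t). (f v::nat)) = f (j+1) + (\<Sum>v\<in>inT (2*j) t. f v) + (\<Sum>v\<in>inT (2*j+1) t. f v)"
  unfolding inT_Suc using inT_disj[of j t] inT_fin by (simp add: sum.union_disjoint)

lemma pp_ok:
  assumes "WF j t" "w \<in> lvs j t" "l = K + w - 1"
    and "valid hds y hv j t" "win y j t = w" "hds w = Fin p" "prefix P p"
    and "\<forall>k. k \<noteq> w \<longrightarrow> head Ss pos' k = hds k" "REL (head Ss pos') (Fin p) w h0"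
    and "pp pos' l t (w,h0,y,hv,c) = (x,h,y',hv',c')"
  shows "valid (head Ss pos') y' hv' j t \<and> win y' j t = x \<and> REL (head Ss pos') (Fin p) x h
    \<and> (\<forall>v. v \<notin> inT j t \<longrightarrow> y' v = y v \<and> hv' v = hv v)
    \<and> c' + (\<Sum>v\<in>inT j t. hv v) + h0 \<le> c + (\<Sum>v\<in>inT j t. hv' v) + h + t"
  using assms
proof (induction t arbitrary: j x h y' hv' c')
  case 0 then show ?case by simp
next
  case (Suc t)
  let ?hd = "head Ss pos'"
  have w: "WF (2*j) t" "WF (2*j+1) t" using WF_ch[OF Suc.prems(1)] by auto
  have j1: "1 \<le> j" using Suc.prems(1) unfolding WF_def by simp
  note dj = inT_disj[OF j1, of t]
  obtain u q where uo: "(u = 2*j \<and> q = 2*j+1) \<or> (u = 2*j+1 \<and> q = 2*j)" and wu: "w \<in> lvs u t"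
    using Suc.prems(2) lvs_Suc by auto
  have wuo: "WF u t" "WF q t" using uo w by auto
  have disjL: "lvs u t \<inter> lvs q t = {}" using uo lvs_disj by auto
  have disjI: "inT u t \<inter> inT q t = {}" "j+1 \<notin> inT u t" "j+1 \<notin> inT q t" using uo dj by auto
  have Tj: "inT j (Suc t) = insert (j+1) (inT u t \<union> inT q t)" using uo inT_Suc by auto
  have Lj: "lvs j (Suc t) = lvs u t \<union> lvs q t" using uo lvs_Suc by auto
  have vu: "valid hds y hv u t" and vo: "valid hds y hv q t" using Suc.prems(4) uo by auto
  have wuin: "win y u t \<in> lvs u t" and woin: "win y q t \<in> lvs q t" using win_in wuo by auto
  have wdef: "win y j (Suc t) = (if y (j+1) = win y (2*j) t then win y (2*j+1) t else win y (2*j) t)"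
    by (simp add: Let_def)
  have yin: "y (j+1) \<in> {win y u t, win y q t}" using Suc.prems(4) uo by auto
  have ab: "win y u t \<noteq> win y q t" using wuin woin disjL by auto
  have wj_uo: "win y j (Suc t) \<in> {win y u t, win y q t}" "win y j (Suc t) \<noteq> y (j+1)"
    using wdef uo ab yin by auto
  have wo: "w \<notin> lvs q t" using wu disjL by auto
  have wwu: "win y u t = w" using wj_uo Suc.prems(5) woin wo by auto
  have ywo: "y (j+1) = win y q t" using yin wj_uo Suc.prems(5) wwu by auto
  have relo: "REL hds (Fin p) (win y q t) (hv (j+1))" using Suc.prems(4,5,6) ywo by simp
  have wone: "win y q t \<noteq> w" using woin wo by auto
  have relo': "REL ?hd (Fin p) (win y q t) (hv (j+1))" using relo REL_cong[of ?hd "win y q t" hds] Suc.prems(8) wone by auto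
  obtain x1 h1 y1 hv1 c1 where p1: "pp pos' l t (w,h0,y,hv,c) = (x1,h1,y1,hv1,c1)"
    by (cases "pp pos' l t (w,h0,y,hv,c)") auto
  have ldiv: "l div 2^Suc t = j" using Suc.prems(2,3) unfolding lvs_def by auto
  have I1: "valid ?hd y1 hv1 u t \<and> win y1 u t = x1 \<and> REL ?hd (Fin p) x1 h1
    \<and> (\<forall>v. v \<notin> inT u t \<longrightarrow> y1 v = y v \<and> hv1 v = hv v)
    \<and> c1 + (\<Sum>v\<in>inT u t. hv v) + h0 \<le> c + (\<Sum>v\<in>inT u t. hv1 v) + h1 + t"
    using Suc.IH[OF wuo(1) wu Suc.prems(3) vu wwu Suc.prems(6,7,8,9) p1] .
  have y1j: "y1 (j+1) = win y q t" "hv1 (j+1) = hv (j+1)" using I1 disjI ywo by auto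
  obtain xw hw lo hl' d where gc: "lcp_compare x1 (?hd x1) h1 (win y q t) (?hd (win y q t)) (hv (j+1)) = (xw,hw,lo,hl',d)"
    by (cases "lcp_compare x1 (?hd x1) h1 (win y q t) (?hd (win y q t)) (hv (j+1))") auto
  have res: "x = xw" "h = hw" "y' = y1(j+1 := lo)" "hv' = hv1(j+1 := hl')" "c' = c1 + d"
    using Suc.prems(10) p1 gc y1j ldiv by (auto simp: play_def)
  have x1in: "x1 \<in> lvs u t" using win_in[OF wuo(1)] I1 by blast
  have K1: "x1 \<in> {1..K}" "win y q t \<in> {1..K}" using lvs_sub wuo x1in woin by blast+
  have neq: "x1 \<noteq> win y q t" using x1in woin disjL by blast
  have G: "((xw = x1 \<and> lo = win y q t \<and> hw = h1) \<or> (xw = win y q t \<and> lo = x1 \<and> hw = hv (j+1)))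
     \<and> REL ?hd (Fin p) xw hw \<and> REL ?hd (?hd xw) lo hl' \<and> d + h1 + hv (j+1) \<le> 1 + hw + hl'"
    using GC[OF Suc.prems(7) K1 goodhd_head _ _ gc] I1 relo' by blast
  have ag1: "\<forall>v\<in>inT u t. y' v = y1 v \<and> hv' v = hv1 v" using res disjI by auto
  have ag2: "\<forall>v\<in>inT q t. y' v = y v \<and> hv' v = hv v" using res disjI I1 by auto
  have hdo: "\<forall>k\<in>lvs q t. hds k = ?hd k" using Suc.prems(8) wo by auto
  have v1: "valid ?hd y' hv' u t" using valid_local[OF _ wuo(1)] I1 ag1 by auto
  have v2: "valid ?hd y' hv' q t" using valid_local[OF vo wuo(2)] ag2 hdo by auto
  have wl: "win y' u t = x1" using win_local[of u t y' y1] ag1 I1 by auto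
  have wr: "win y' q t = win y q t" using win_local[of q t y' y] ag2 by auto
  have yj: "y' (j+1) = lo" using res by simp
  have wj: "win y' j (Suc t) = xw"
  proof -
    have "win y' j (Suc t) = (if y' (j+1) = win y' (2*j) t then win y' (2*j+1) t else win y' (2*j) t)"
      by (simp add: Let_def)
    then show ?thesis using uo wl wr yj G neq by auto
  qed
  have val: "valid ?hd y' hv' j (Suc t)"
  proof -
    have "valid ?hd y' hv' (2*j) t" "valid ?hd y' hv' (2*j+1) t" using v1 v2 uo by auto
    moreover have "y' (j+1) \<in> {win y' (2*j) t, win y' (2*j+1) t}" using uo wl wr yj G by auto
    moreover have "REL ?hd (?hd (win y' j (Suc t))) (y' (j+1)) (hv' (j+1))" using wj yj G res by simp
    ultimately show ?thesis by simp
  qed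
  have out: "\<forall>v. v \<notin> inT j (Suc t) \<longrightarrow> y' v = y v \<and> hv' v = hv v"
    using res I1 Tj by auto
  have fin: "finite (inT u t)" "finite (inT q t)" using inT_fin by auto
  have s1: "(\<Sum>v\<in>inT j (Suc t). hv v) = hv (j+1) + (\<Sum>v\<in>inT u t. hv v) + (\<Sum>v\<in>inT q t. hv v)"
    unfolding Tj using disjI fin by (simp add: sum.union_disjoint)
  have s2: "(\<Sum>v\<in>inT j (Suc t). hv' v) = hl' + (\<Sum>v\<in>inT u t. hv1 v) + (\<Sum>v\<in>inT q t. hv v)"
  proof -
    have "(\<Sum>v\<in>inT j (Suc t). hv' v) = hv' (j+1) + (\<Sum>v\<in>inT u t. hv' v) + (\<Sum>v\<in>inT q t. hv' v)"
      unfolding Tj using disjI fin by (simp add: sum.union_disjoint)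
    moreover have "(\<Sum>v\<in>inT u t. hv' v) = (\<Sum>v\<in>inT u t. hv1 v)" using ag1 by simp
    moreover have "(\<Sum>v\<in>inT q t. hv' v) = (\<Sum>v\<in>inT q t. hv v)" using ag2 by simp
    ultimately show ?thesis using res by simp
  qed
  have cost: "c' + (\<Sum>v\<in>inT j (Suc t). hv v) + h0 \<le> c + (\<Sum>v\<in>inT j (Suc t). hv' v) + h + Suc t"
    using s1 s2 I1 G res by simp
  show ?case using val wj G res out cost by blast
qed

end



lemma lcp_array_len: "length (lcp_array xs) = length xs - 1"
  by (induction xs rule: lcp_array.induct) auto

lemma lcp_array_nth: "i+1 < length xs \<Longrightarrow> lcp_array xs ! i = lcp (xs!i) (xs!(i+1))"
proof (induction xs arbitrary: i rule: lcp_array.induct)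
  case (1 a b xs) then show ?case by (cases i) auto
qed auto

lemma lcp_array_snoc: "xs \<noteq> [] \<Longrightarrow> lcp_array (xs @ [a]) = lcp_array xs @ [lcp (last xs) a]"
  by (induction xs rule: lcp_array.induct) auto

lemma sum_shift1: "(\<Sum>k\<in>{1..(K::nat)}. g (k-1)) = (\<Sum>k<K. (g k :: 'b::comm_monoid_add))"
proof (induction K)
  case (Suc K)
  have "{1..Suc K} = insert (Suc K) {1..K}" by auto
  then show ?case using Suc by (simp add: add.commute)
qed simp

context lm begin

definition len :: "nat \<Rightarrow> nat" where "len k = length (Ss!(k-1))"
definition In :: "nat \<Rightarrow> nat \<Rightarrow> nat" where "In k i = hbar + sum_list (take i (Hs!(k-1)))"

definition nn :: nat where "nn = sum_list (map length Ss)"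

lemma nn_sum: "nn = (\<Sum>k\<in>{1..K}. len k)"
  unfolding nn_def len_def sum_shift1[of "\<lambda>k. length (Ss!k)"] sum_list_sum_nth lSs
  by (simp add: atLeast0LessThan lSs)

lemma mset_sum: "mset (concat Ss) = (\<Sum>k\<in>{1..K}. mset (Ss!(k-1)))"
  unfolding sum_shift1[of "\<lambda>k. mset (Ss!k)"] mset_concat sum_list_sum_nth lSs
  by (simp add: atLeast0LessThan lSs)

lemma lvs_root: "lvs 1 m = {1..K}"
proof -
  have K0: "0 < K" using K by simp
  have e: "(K+k-1) div K = 1 \<longleftrightarrow> k \<le> K" if k1: "1 \<le> k" for k
  proof
    assume a: "(K+k-1) div K = 1"
    have "K+k-1 < ((K+k-1) div K + 1) * K" by (rule lt_div_succ[OF K0])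
    then have "K + k - 1 < 2 * K" unfolding a by simp
    then show "k \<le> K" by linarith
  next
    assume "k \<le> K"
    then have "K + k - 1 = 1 * K + (k - 1)" "k - 1 < K" using k1 by auto
    then show "(K+k-1) div K = 1" by (simp only: div_mult_self3 div_less) 
  qed
  have "lvs 1 m = {k. 1 \<le> k \<and> (K+k-1) div K = 1}" unfolding lvs_def K[symmetric] by simp
  also have "\<dots> = {1..K}" using e by auto
  finally show ?thesis .
qed

lemma WF_root: "WF 1 m"
  unfolding WF_def using K by simp

definition INV :: "nat \<Rightarrow> 'a mstate \<Rightarrow> bool" where
  "INV j st = (case st of (pos, y, hv, w, h1, out, c) \<Rightarrow>
     (\<forall>k\<in>{1..K}. pos k \<le> len k) \<and> (\<Sum>k\<in>{1..K}. pos k) = j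
     \<and> valid (head Ss pos) y hv 1 m \<and> win y 1 m = w
     \<and> (\<exists>S. map fst out = map Fin S \<and> sorted S \<and> tl (map snd out) = lcp_array S
          \<and> (out \<noteq> [] \<longrightarrow> snd (hd out) = hbar) \<and> length S = j
          \<and> REL (head Ss pos) (Fin (if S = [] then P else last S)) w h1
          \<and> (S \<noteq> [] \<longrightarrow> prefix P (last S))
          \<and> mset S = (\<Sum>k\<in>{1..K}. mset (take (pos k) (Ss!(k-1)))))
     \<and> c + (\<Sum>k\<in>{1..K}. In k (pos k)) \<le> h1 + (\<Sum>v\<in>inT 1 m. hv v) + sum_list (map snd out) + (K-1) + j*m)"

lemma INV_init: "INV 0 (merge_init Ss K hbar)"
proof -
  obtain x h y' hv' c' where tb: "tb 1 m (\<lambda>_. 0, \<lambda>_. 0, 0) = (x,h,y',hv',c')"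
    by (cases "tb 1 m (\<lambda>_. 0, \<lambda>_. 0, 0)") auto
  have l: "[1*2^m - K + 1 ..< 2*2^m - K + 1] = [1..<K+1]" using K by simp
  have f: "fold (\<lambda>k st. init_step Ss K hbar st k) [1..<K+1] (\<lambda>_. 0, \<lambda>_. 0, 0) = sc 2 (x,h,y',hv',c')"
    using fold_tb[OF WF_root, of "\<lambda>_. 0" "\<lambda>_. 0" 0] by (simp only: l tb one_add_one)
  have s2: "sc 2 (x,h,y',hv',c') = (y'(1:=x), hv'(1:=h), c')"
    unfolding sc_def by (subst climb_init.simps) simp
  have mi: "merge_init Ss K hbar = (\<lambda>_. 0, y'(1:=x), hv'(1:=h), x, h, [], c')"
    unfolding merge_init_def f s2 by simp
  note T = tb_ok[OF WF_root tb]
  have n1: "1 \<notin> inT 1 m" using inT_ge[of 1 1 m] by auto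
  have ag: "\<forall>v\<in>inT 1 m. y' v = (y'(1:=x)) v \<and> hv' v = (hv'(1:=h)) v" using n1 by auto
  have v: "valid (head Ss (\<lambda>_. 0)) (y'(1:=x)) (hv'(1:=h)) 1 m"
  proof -
    have "valid (head Ss (\<lambda>_. 0)) y' hv' 1 m" using T by blast
    from valid_local[OF this WF_root ag, where hds' = "head Ss (\<lambda>_. 0)"] show ?thesis by (simp add: fun_upd_def)
  qed
  have w: "win (y'(1:=x)) 1 m = x" using win_local[of 1 m y' "y'(1:=x)"] ag T by auto
  have sh: "(\<Sum>v\<in>inT 1 m. (hv'(1:=h)) v) = (\<Sum>v\<in>inT 1 m. hv' v)" using n1
    by (intro sum.cong) auto
  have In0: "(\<Sum>k\<in>{1..K}. In k 0) = K * hbar" by (simp add: In_def)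
  have c0: "c' + 2^m*hbar + 1 \<le> 0 + h + (\<Sum>v\<in>inT 1 m. hv' v) + 2^m" using T by blast
  have cost: "c' + K * hbar \<le> h + (\<Sum>v\<in>inT 1 m. hv' v) + (K - 1)"
    using c0 unfolding K[symmetric] by linarith
  show ?thesis unfolding mi INV_def using v w T cost sh In0
    by (auto simp: len_def)
qed

lemma sum_upd: "finite A \<Longrightarrow> w \<in> A \<Longrightarrow> (\<forall>k\<in>A. k \<noteq> w \<longrightarrow> g' k = g k) \<Longrightarrow>
   (\<Sum>k\<in>A. g' k) + g w = (\<Sum>k\<in>A. g k) + (g' w :: 'b::comm_monoid_add)"
proof -
  assume a: "finite A" "w \<in> A" "\<forall>k\<in>A. k \<noteq> w \<longrightarrow> g' k = g k"
  have "(\<Sum>k\<in>A. g' k) = g' w + (\<Sum>k\<in>A-{w}. g' k)" using a by (simp add: sum.remove)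
  moreover have "(\<Sum>k\<in>A. g k) = g w + (\<Sum>k\<in>A-{w}. g k)" using a by (simp add: sum.remove)
  moreover have "(\<Sum>k\<in>A-{w}. g' k) = (\<Sum>k\<in>A-{w}. g k)" using a by (intro sum.cong) auto
  ultimately show ?thesis by (simp add: ac_simps)
qed

lemma INV_step:
  assumes jn: "j < nn" and inv: "INV j st"
  shows "INV (Suc j) (merge_step Ss Hs K st)"
proof -
  obtain pos y hv w h1 out c where st: "st = (pos,y,hv,w,h1,out,c)" by (cases st) auto
  let ?hd = "head Ss pos"
  have pl: "\<forall>k\<in>{1..K}. pos k \<le> len k" and ps: "(\<Sum>k\<in>{1..K}. pos k) = j"
    and v: "valid ?hd y hv 1 m" and ww: "win y 1 m = w"
    and co: "c + (\<Sum>k\<in>{1..K}. In k (pos k)) \<le> h1 + (\<Sum>v\<in>inT 1 m. hv v) + sum_list (map snd out) + (K-1) + j*m"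
    using inv unfolding INV_def st by auto
  obtain S where S: "map fst out = map Fin S" "sorted S" "tl (map snd out) = lcp_array S"
    "out \<noteq> [] \<longrightarrow> snd (hd out) = hbar" "length S = j"
    "REL ?hd (Fin (if S = [] then P else last S)) w h1" "S \<noteq> [] \<longrightarrow> prefix P (last S)"
    "mset S = (\<Sum>k\<in>{1..K}. mset (take (pos k) (Ss!(k-1))))"
    using inv unfolding INV_def st by auto
  have "\<exists>k\<in>{1..K}. pos k < len k"
  proof (rule ccontr)
    assume "\<not> ?thesis"
    then have "\<forall>k\<in>{1..K}. pos k = len k" using pl by force
    then have "(\<Sum>k\<in>{1..K}. pos k) = nn" unfolding nn_sum by simp
    then show False using ps jn by simp
  qed
  then obtain k0 where k0: "k0 \<in> {1..K}" "pos k0 < len k0" by blast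
  then have hk0: "?hd k0 = Fin (Ss!(k0-1)!pos k0)" by (simp add: head_def len_def)
  have "xle (?hd w) (?hd k0)" using valid_min[OF v WF_root] ww k0 lvs_root by auto
  then obtain p where hw: "?hd w = Fin p" using hk0 by (auto simp: xle_def)
  have wK: "w \<in> {1..K}" using win_in[OF WF_root] ww lvs_root by auto
  have wl: "w \<in> lvs 1 m" using wK lvs_root by simp
  have pw: "pos w < len w" "p = Ss!(w-1)!pos w" using hw by (auto simp: head_def len_def split: if_splits)
  have pP: "prefix P p" using goodhd_head[of pos] wK hw unfolding goodhd_def by auto
  define pos' where "pos' = pos(w := Suc (pos w))"
  define hn where "hn = (if pos' w < length (Ss!(w-1)) then Hs!(w-1)!(pos' w - 1) else 0)"
  have wK1: "w - 1 < K" using wK by auto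
  have Hw: "Hs!(w-1) = lcp_array (Ss!(w-1))" using Hdef wK1 by blast
  have sw: "sorted (Ss!(w-1))" using srt wK1 by blast
  have relnew: "REL (head Ss pos') (Fin p) w hn"
  proof (cases "Suc (pos w) < len w")
    case True
    let ?q = "Ss!(w-1)!Suc (pos w)"
    have hq: "head Ss pos' w = Fin ?q" using True by (simp add: pos'_def head_def len_def)
    have "p \<le> ?q" using sw True pw unfolding len_def by (simp add: sorted_iff_nth_mono)
    moreover have "hn = lcp p ?q" using True pw Hw lcp_array_nth[of "pos w" "Ss!(w-1)"]
      by (simp add: hn_def pos'_def len_def)
    ultimately show ?thesis using hq by (simp add: REL_def)
  next
    case False
    then have "head Ss pos' w = Sentinel" "hn = 0" by (auto simp: pos'_def head_def len_def hn_def)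
    then show ?thesis by (simp add: REL_def)
  qed
  have agree: "\<forall>k. k \<noteq> w \<longrightarrow> head Ss pos' k = ?hd k" by (simp add: pos'_def head_def)
  have ldiv: "(K + w - 1) div 2^m = 1" using wl unfolding lvs_def by simp
  obtain x h' y' hv' c' where ppe: "pp pos' (K+w-1) m (w,hn,y,hv,c) = (x,h',y',hv',c')"
    by (cases "pp pos' (K+w-1) m (w,hn,y,hv,c)") auto
  have cl: "climb Ss pos' w hn (K+w) y hv c = (x,h',y',hv',c')"
  proof -
    have e: "K + w = (K + w - 1) + 1" using wK by simp
    have c2: "climb Ss pos' x h' (Suc (Suc 0)) y' hv' c' = (x,h',y',hv',c')" by (subst climb.simps) simp
    have "climb Ss pos' w hn (K+w-1+1) y hv c = (x,h',y',hv',c')"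
      using climb_pp[of "K+w-1" m pos' w hn y hv c] ldiv ppe c2 by simp
    then show ?thesis by (simp only: e[symmetric])
  qed
  have ms0: "merge_step Ss Hs K st = (case climb Ss pos' w hn (K+w) y hv c of (x,h',y',hv',c') \<Rightarrow>
      (pos', y', hv', x, h', out @ [(?hd w, h1)], c'))"
    unfolding merge_step_def st Let_def pos'_def hn_def by simp
  have ms: "merge_step Ss Hs K st = (pos', y', hv', x, h', out @ [(Fin p, h1)], c')"
    unfolding ms0 cl hw by simp
  note PP = pp_ok[OF WF_root wl refl v ww hw pP agree relnew ppe]
  have pl': "\<forall>k\<in>{1..K}. pos' k \<le> len k" using pl pw by (simp add: pos'_def)
  have ps': "(\<Sum>k\<in>{1..K}. pos' k) = Suc j"
    using sum_upd[of "{1..K}" w pos' pos] wK ps by (simp add: pos'_def)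
  define S' where "S' = S @ [p]"
  have lastS: "S \<noteq> [] \<Longrightarrow> last S \<le> p \<and> h1 = lcp (last S) p" using S(6) hw by (simp add: REL_def)
  have firstS: "S = [] \<Longrightarrow> h1 = hbar" using S(6) hw prefix_lcp[OF pP] lP by (simp add: REL_def)
  have c1: "map fst (out @ [(Fin p, h1)]) = map Fin S'" using S(1) by (simp add: S'_def)
  have c2: "sorted S'"
  proof (cases "S = []")
    case True then show ?thesis by (simp add: S'_def)
  next
    case False
    have "x \<le> last S" if xin: "x \<in> set S" for x
    proof -
      obtain i where i: "i < length S" "S!i = x" using xin by (auto simp: in_set_conv_nth)
      have "S!i \<le> S!(length S - 1)" using sorted_nth_mono[OF S(2), of i "length S - 1"] i by simp
      then show ?thesis using i False by (simp add: last_conv_nth)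
    qed
    then have "\<forall>x\<in>set S. x \<le> p" using lastS[OF False] order.trans by blast
    then show ?thesis using S(2) by (simp add: S'_def sorted_append)
  qed
  have outS: "out = [] \<longleftrightarrow> S = []" using S(1) by (metis Nil_is_map_conv)
  have c3: "tl (map snd (out @ [(Fin p, h1)])) = lcp_array S'"
  proof (cases "S = []")
    case True then show ?thesis using outS by (simp add: S'_def)
  next
    case False
    then have "out \<noteq> []" using outS by simp
    then have "tl (map snd (out @ [(Fin p, h1)])) = tl (map snd out) @ [h1]" by (cases out) auto
    then show ?thesis using S(3) lcp_array_snoc[OF False] lastS[OF False] by (simp add: S'_def)
  qed
  have c4: "out @ [(Fin p, h1)] \<noteq> [] \<longrightarrow> snd (hd (out @ [(Fin p, h1)])) = hbar"
    using S(4) outS firstS by (cases out) auto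
  have c5: "length S' = Suc j" using S(5) by (simp add: S'_def)
  have c6: "REL (head Ss pos') (Fin (if S' = [] then P else last S')) x h'" using PP by (simp add: S'_def)
  have c7: "S' \<noteq> [] \<longrightarrow> prefix P (last S')" using pP by (simp add: S'_def)
  have c8: "mset S' = (\<Sum>k\<in>{1..K}. mset (take (pos' k) (Ss!(k-1))))"
  proof -
    have "take (pos' w) (Ss!(w-1)) = take (pos w) (Ss!(w-1)) @ [p]"
      using pw unfolding len_def by (simp add: pos'_def take_Suc_conv_app_nth)
    then have "(\<Sum>k\<in>{1..K}. mset (take (pos' k) (Ss!(k-1)))) + mset (take (pos w) (Ss!(w-1)))
      = (\<Sum>k\<in>{1..K}. mset (take (pos k) (Ss!(k-1)))) + (mset (take (pos w) (Ss!(w-1))) + {#p#})"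
      using sum_upd[of "{1..K}" w "\<lambda>k. mset (take (pos' k) (Ss!(k-1)))" "\<lambda>k. mset (take (pos k) (Ss!(k-1)))"] wK
      by (simp add: pos'_def)
    then show ?thesis using S(8) by (simp add: S'_def)
  qed
  have Inw: "In w (pos' w) = In w (pos w) + hn"
  proof -
    have lH: "length (Hs!(w-1)) = len w - 1" using Hw lcp_array_len by (simp add: len_def)
    show ?thesis
    proof (cases "Suc (pos w) < len w")
      case True
      then have "pos w < length (Hs!(w-1))" using lH by simp
      then show ?thesis using True by (simp add: In_def pos'_def hn_def len_def take_Suc_conv_app_nth)
    next
      case False
      then have "length (Hs!(w-1)) \<le> pos w" using lH by simp
      then show ?thesis using False by (simp add: In_def pos'_def hn_def len_def)
    qed
  qed
  have Ins: "(\<Sum>k\<in>{1..K}. In k (pos' k)) = (\<Sum>k\<in>{1..K}. In k (pos k)) + hn"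
    using sum_upd[of "{1..K}" w "\<lambda>k. In k (pos' k)" "\<lambda>k. In k (pos k)"] wK Inw by (simp add: pos'_def)
  have PPc: "c' + (\<Sum>v\<in>inT 1 m. hv v) + hn \<le> c + (\<Sum>v\<in>inT 1 m. hv' v) + h' + m" using PP by blast
  have cost: "c' + (\<Sum>k\<in>{1..K}. In k (pos' k)) \<le> h' + (\<Sum>v\<in>inT 1 m. hv' v)
      + sum_list (map snd (out @ [(Fin p, h1)])) + (K-1) + Suc j * m"
    using co PPc Ins by simp
  have ex: "\<exists>S. map fst (out @ [(Fin p, h1)]) = map Fin S \<and> sorted S
      \<and> tl (map snd (out @ [(Fin p, h1)])) = lcp_array S
      \<and> (out @ [(Fin p, h1)] \<noteq> [] \<longrightarrow> snd (hd (out @ [(Fin p, h1)])) = hbar) \<and> length S = Suc j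
      \<and> REL (head Ss pos') (Fin (if S = [] then P else last S)) x h'
      \<and> (S \<noteq> [] \<longrightarrow> prefix P (last S))
      \<and> mset S = (\<Sum>k\<in>{1..K}. mset (take (pos' k) (Ss!(k-1))))"
    using c1 c2 c3 c4 c5 c6 c7 c8 by blast
  have vw: "valid (head Ss pos') y' hv' 1 m" "win y' 1 m = x" using PP by blast+
  show ?thesis unfolding ms INV_def prod.case using pl' ps' vw ex cost by blast
qed

lemma INV_iter: "j \<le> nn \<Longrightarrow> INV j ((merge_step Ss Hs K ^^ j) (merge_init Ss K hbar))"
proof (induction j)
  case 0 then show ?case using INV_init by simp
next
  case (Suc j) then show ?case using INV_step by simp
qed

lemma INV_final:
  assumes inv: "INV nn (pos,y,hv,w,h1,out,c)"
  shows "\<exists>S0. map fst out = map Fin S0 \<and> sorted S0 \<and> mset S0 = mset (concat Ss)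
     \<and> tl (map snd out) = lcp_array S0
     \<and> c + (\<Sum>k<K. L (Hs!k)) \<le> L (lcp_array S0) + (K-1) + nn*m"
proof -
  let ?hd = "head Ss pos"
  have pl: "\<forall>k\<in>{1..K}. pos k \<le> len k" and ps: "(\<Sum>k\<in>{1..K}. pos k) = nn"
    and v: "valid ?hd y hv 1 m" and ww: "win y 1 m = w"
    and co: "c + (\<Sum>k\<in>{1..K}. In k (pos k)) \<le> h1 + (\<Sum>v\<in>inT 1 m. hv v) + sum_list (map snd out) + (K-1) + nn*m"
    using inv unfolding INV_def by auto
  obtain S where S: "map fst out = map Fin S" "sorted S" "tl (map snd out) = lcp_array S"
    "out \<noteq> [] \<longrightarrow> snd (hd out) = hbar" "length S = nn"
    "REL ?hd (Fin (if S = [] then P else last S)) w h1"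
    "mset S = (\<Sum>k\<in>{1..K}. mset (take (pos k) (Ss!(k-1))))"
    using inv unfolding INV_def by auto
  have pe: "\<forall>k\<in>{1..K}. pos k = len k"
  proof (rule ccontr)
    assume "\<not> ?thesis"
    then obtain k where "k \<in> {1..K}" "pos k < len k" using pl by force
    then have "(\<Sum>k\<in>{1..K}. pos k) < (\<Sum>k\<in>{1..K}. len k)"
      using pl by (intro sum_strict_mono_ex1) auto
    then show False using ps nn_sum by simp
  qed
  have ms: "mset S = mset (concat Ss)"
    unfolding S(7) mset_sum using pe by (intro sum.cong) (auto simp: len_def)
  have sent: "\<forall>k\<in>lvs 1 m. ?hd k = Sentinel" using pe lvs_root by (auto simp: head_def len_def)
  have wK: "w \<in> {1..K}" using win_in[OF WF_root] ww lvs_root by auto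
  have h1s: "h1 \<le> sb w" using S(6) sent wK lvs_root by (auto simp: REL_def)
  have hvs: "\<forall>v\<in>inT 1 m. hv v \<le> sb (y v)" using valid_sent[OF v WF_root sent] .
  have sbsum: "h1 + (\<Sum>v\<in>inT 1 m. hv v) \<le> (\<Sum>k\<in>{1..K}. sb k)"
  proof -
    have "(\<Sum>v\<in>inT 1 m. hv v) \<le> (\<Sum>v\<in>inT 1 m. sb (y v))" using hvs by (intro sum_mono) auto
    moreover have "(\<Sum>v\<in>inT 1 m. sb (y v)) + sb w = (\<Sum>k\<in>{1..K}. sb k)"
      using valid_sum[OF v WF_root, of sb] ww lvs_root by simp
    ultimately show ?thesis using h1s by linarith
  qed
  have Insum: "(\<Sum>k\<in>{1..K}. In k (pos k)) = K * hbar + (\<Sum>k<K. L (Hs!k))"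
  proof -
    have "In k (pos k) = hbar + L (Hs!(k-1))" if k: "k \<in> {1..K}" for k
    proof -
      have "k - 1 < K" using k by auto
      then have "Hs!(k-1) = lcp_array (Ss!(k-1))" using Hdef by blast
      then have "length (Hs!(k-1)) \<le> len k" by (simp add: lcp_array_len len_def)
      then show ?thesis using pe k by (simp add: In_def L_def)
    qed
    then have "(\<Sum>k\<in>{1..K}. In k (pos k)) = (\<Sum>k\<in>{1..K}. hbar + L (Hs!(k-1)))" by (intro sum.cong) auto
    also have "\<dots> = K * hbar + (\<Sum>k\<in>{1..K}. L (Hs!(k-1)))" by (simp add: sum.distrib)
    also have "(\<Sum>k\<in>{1..K}. L (Hs!(k-1))) = (\<Sum>k<K. L (Hs!k))" by (rule sum_shift1)
    finally show ?thesis .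
  qed
  have K1: "1 \<le> K" using K by simp
  have main: "c + (\<Sum>k<K. L (Hs!k)) \<le> L (lcp_array S) + (K-1) + nn*m"
  proof (cases "nn = 0")
    case True
    then have "S = []" "out = []" using S(5) S(1) by auto
    moreover have "(\<Sum>k\<in>{1..K}. sb k) \<le> K * hbar"
      using sum_bounded_above[of "{1..K}" sb hbar] sb_le by simp
    ultimately show ?thesis using co sbsum Insum True by simp
  next
    case False
    then have Sne: "S \<noteq> []" "out \<noteq> []" using S(5) S(1) by auto
    then have os: "sum_list (map snd out) = hbar + L (lcp_array S)"
      using S(3) S(4) by (cases out) (auto simp: L_def)
    obtain k0 where k0: "k0 \<in> {1..K}" "0 < len k0"
    proof -
      have "(\<Sum>k\<in>{1..K}. len k) \<noteq> 0" using False nn_sum by simp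
      then show ?thesis using that by (metis neq0_conv sum.neutral)
    qed
    have "sb k0 = 0" using k0 by (simp add: sb_def len_def)
    then have "(\<Sum>k\<in>{1..K}. sb k) = (\<Sum>k\<in>{1..K}-{k0}. sb k)" using k0 by (simp add: sum.remove)
    also have "\<dots> \<le> card ({1..K}-{k0}) * hbar" using sum_bounded_above[of "{1..K}-{k0}" sb hbar] sb_le by simp
    also have "card ({1..K}-{k0}) = K - 1" using k0 by simp
    finally have "(\<Sum>k\<in>{1..K}. sb k) \<le> (K-1) * hbar" .
    moreover have "(K-1)*hbar + hbar = K * hbar" using K1 by (metis Suc_diff_1 less_le_trans mult_Suc zero_less_one add.commute)
    ultimately show ?thesis using co sbsum Insum os by linarith
  qed
  show ?thesis using S(1,2,3) ms main by blast
qed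

end



theorem mainTheorem4:
  fixes Ss :: "'a::linorder list list list" and Hs :: "nat list list" and K hbar :: nat
  assumes "\<exists>m. K = 2 ^ m"
    and "length Ss = K" and "length Hs = K"
    and "\<forall>k<K. sorted (Ss ! k)"
    and "\<forall>k<K. Hs ! k = lcp_array (Ss ! k)"
    and "\<exists>p. length p = hbar \<and> (\<forall>k<K. \<forall>s\<in>set (Ss ! k). prefix p s)"
  shows "\<exists>S0. map fst (fst (lcp_merge K hbar Ss Hs)) = map Fin S0
           \<and> sorted S0 \<and> mset S0 = mset (concat Ss)
           \<and> tl (map snd (fst (lcp_merge K hbar Ss Hs))) = lcp_array S0
           \<and> real (snd (lcp_merge K hbar Ss Hs))
               \<le> (real (L (lcp_array S0)) - (\<Sum>k<K. real (L (Hs ! k))))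
                  + real (sum_list (map length Ss)) * log 2 (real K) + real K"
proof -
  obtain m where Km: "K = 2^m" using assms(1) by blast
  obtain P where P: "length P = hbar" "\<forall>k<K. \<forall>s\<in>set (Ss!k). prefix P s" using assms(6) by blast
  interpret lm Ss Hs K hbar m P
    using Km assms(2-5) P by unfold_locales auto
  obtain pos y hv w h1 out c where st:
    "(merge_step Ss Hs K ^^ nn) (merge_init Ss K hbar) = (pos,y,hv,w,h1,out,c)"
    by (cases "(merge_step Ss Hs K ^^ nn) (merge_init Ss K hbar)") auto
  have lmg: "lcp_merge K hbar Ss Hs = (out, c)"
    unfolding lcp_merge_def nn_def[symmetric] st by simp
  have inv: "INV nn (pos,y,hv,w,h1,out,c)" using INV_iter[OF order_refl] st by simp
  obtain S0 where S0: "map fst out = map Fin S0" "sorted S0" "mset S0 = mset (concat Ss)"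
     "tl (map snd out) = lcp_array S0"
     "c + (\<Sum>k<K. L (Hs!k)) \<le> L (lcp_array S0) + (K-1) + nn*m"
    using INV_final[OF inv] by blast
  have lg: "log 2 (real K) = real m" using Km by simp
  have K1: "1 \<le> K" using Km by simp
  have "real c + (\<Sum>k<K. real (L (Hs!k))) \<le> real (L (lcp_array S0)) + real (K-1) + real nn * real m"
    using S0(5) by (metis of_nat_add of_nat_le_iff of_nat_mult of_nat_sum)
  moreover have "real (K-1) \<le> real K" by simp
  ultimately have "real c \<le> (real (L (lcp_array S0)) - (\<Sum>k<K. real (L (Hs ! k))))
                  + real (sum_list (map length Ss)) * log 2 (real K) + real K"
    unfolding lg nn_def[symmetric] by linarith
  then show ?thesis using S0 lmg by auto
qed


end
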